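(* Let $L>0$, let $\rho_1,\rho_2,b,k,k_0>0$ and $\ell>0$, and assume the structural assumptions on $F$ listed in the context (in particular $F\ge -\beta(u^2+v^2+w^2)-m_F$ with $0\le\beta<\pi^2/(2\gamma_3L^2)$). Then there exists a constant $\beta_0>0$ such that, along every solution $(\varphi,\psi,w)$ of the Bresse system (with Dirichlet boundary conditions), $$\mathcal{E}_{\ell}(t)\ \ge\ \beta_0\,E_{\ell}(t)-L\,m_F\qquad\text{for all } t\ge 0 .$$ In addition, if $\ell\in(0,\pi/(2L))$, then $\beta_0$ is independent of $\ell$.
   Context: Norms: $\|\cdot\|$ is the $L^2(0,L)$ norm. The Bresse system on $(0,L)\times\mathbb{R}^+$ is $\rho_1\varphi_{tt}-k(\varphi_x+\psi+\ell w)_x-k_0\ell(w_x-\ell\varphi)+g_1(\varphi_t)+f_1(\varphi,\psi,w)=0$, $\rho_2\psi_{tt}-b\psi_{xx}+k(\varphi_x+\psi+\ell w)+g_2(\psi_t)+f_2(\varphi,\psi,w)=0$, $\rho_1 w_{tt}-k_0(w_x-\ell\varphi)_x+k\ell(\varphi_x+\psi+\ell w)+g_3(w_t)+f_3(\varphi,\psi,w)=0$, with $\varphi=\psi=w=0$ at $x=0$ and $x=L$. For $y=(\varphi,\psi,w,\tilde\varphi,\tilde\psi,\tilde w)\in H^1_0(0,L)^3\times L^2(0,L)^3$ set $\|y\|_{\mathcal{H}_\ell}^2=\rho_1\|\tilde\varphi\|^2+\rho_2\|\tilde\psi\|^2+\rho_1\|\tilde w\|^2+b\|\psi_x\|^2+k\|\varphi_x+\psi+\ell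 w\|^2+k_0\|w_x-\ell\varphi\|^2$. Let $\gamma_3>0$ be a constant such that $\|\varphi_x\|^2+\|\psi_x\|^2+\|w_x\|^2\le\gamma_3\big(b\|\psi_x\|^2+k\|\varphi_x+\psi+\ell w\|^2+k_0\|w_x-\ell\varphi\|^2\big)$ for all $\varphi,\psi,w\in H^1_0(0,L)$ (for $\ell$ in an interval $[0,\ell_0]$ with $\ell_0<\pi/(2L)$ such a constant can be chosen independently of $\ell$). Assumptions on $F$: $F\in C^2(\mathbb{R}^3)$, $(f_1,f_2,f_3)=\nabla F$, and there are $\beta,m_F\ge0$ with $0\le\beta<\pi^2/(2\gamma_3L^2)$ such that $F(u,v,w)\ge-\beta(|u|^2+|v|^2+|w|^2)-m_F$ for all $u,v,w\in\mathbb{R}$. Energies along a solution: $E_\ell(t)=\tfrac12\|(\varphi,\psi,w,\varphi_t,\psi_t,w_t)(t)\|_{\mathcal{H}_\ell}^2$ and $\mathcal{E}_\ell(t)=E_\ell(t)+\int_0^LF(\varphi,\psi,w)\,dx$. *)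

theory Defs
  imports "HOL-Analysis.Analysis"
begin

definition sqn :: "real \<Rightarrow> (real \<Rightarrow> real) \<Rightarrow> real" where
  "sqn L f = integral {0..L} (\<lambda>x. (f x)^2)"

definition ipL :: "real \<Rightarrow> (real \<Rightarrow> real) \<Rightarrow> (real \<Rightarrow> real) \<Rightarrow> real" where
  "ipL L f g = integral {0..L} (\<lambda>x. f x * g x)"

definition sq_int :: "real \<Rightarrow> (real \<Rightarrow> real) \<Rightarrow> bool" where
  "sq_int L f \<longleftrightarrow> f measurable_on {0..L} \<and> (\<lambda>x. (f x)^2) integrable_on {0..L}"

text \<open>u is (the continuous representative of) an element of H^1_0(0,L) with weak derivative u':
  u' in L2(0,L), u(x) = integral of u' over [0,x] (so u(0)=0), and u(L)=0.\<close>
definition H10 :: "real \<Rightarrow> (real \<Rightarrow> real) \<Rightarrow> (real \<Rightarrow> real) \<Rightarrow> bool" where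
  "H10 L u u' \<longleftrightarrow> sq_int L u' \<and> u' absolutely_integrable_on {0..L}
      \<and> (\<forall>x\<in>{0..L}. u x = integral {0..x} u') \<and> u L = 0"

definition gamma3_ok :: "real \<Rightarrow> real \<Rightarrow> real \<Rightarrow> real \<Rightarrow> real \<Rightarrow> real \<Rightarrow> bool" where
  "gamma3_ok L b k k0 ell \<gamma>3 \<longleftrightarrow>
     (\<forall>\<phi> \<psi> w \<phi>x \<psi>x wx. H10 L \<phi> \<phi>x \<and> H10 L \<psi> \<psi>x \<and> H10 L w wx \<longrightarrow>
        sqn L \<phi>x + sqn L \<psi>x + sqn L wx
          \<le> \<gamma>3 * (b * sqn L \<psi>x + k * sqn L (\<lambda>x. \<phi>x x + \<psi> x + ell * w x)
                   + k0 * sqn L (\<lambda>x. wx x - ell * \<phi> x)))"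

definition bresse_E :: "real \<Rightarrow> real \<Rightarrow> real \<Rightarrow> real \<Rightarrow> real \<Rightarrow> real \<Rightarrow> real \<Rightarrow>
    (real \<Rightarrow> real) \<Rightarrow> (real \<Rightarrow> real) \<Rightarrow> (real \<Rightarrow> real) \<Rightarrow>
    (real \<Rightarrow> real) \<Rightarrow> (real \<Rightarrow> real) \<Rightarrow> (real \<Rightarrow> real) \<Rightarrow>
    (real \<Rightarrow> real) \<Rightarrow> (real \<Rightarrow> real) \<Rightarrow> (real \<Rightarrow> real) \<Rightarrow> real" where
  "bresse_E L \<rho>1 \<rho>2 b k k0 ell \<phi> \<psi> w \<phi>x \<psi>x wx \<phi>t \<psi>t wt =
     1/2 * (\<rho>1 * sqn L \<phi>t + \<rho>2 * sqn L \<psi>t + \<rho>1 * sqn L wt + b * sqn L \<psi>x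
            + k * sqn L (\<lambda>x. \<phi>x x + \<psi> x + ell * w x) + k0 * sqn L (\<lambda>x. wx x - ell * \<phi> x))"

text \<open>Weak (variational) solution on [0,oo) of the Bresse system with Dirichlet boundary conditions.
  Components are functions of (t, x); phix etc. are spatial weak derivatives, phit etc. velocities.\<close>
definition bresse_solution ::
  "real \<Rightarrow> real \<Rightarrow> real \<Rightarrow> real \<Rightarrow> real \<Rightarrow> real \<Rightarrow> real \<Rightarrow>
   (real \<times> real \<times> real \<Rightarrow> real) \<Rightarrow> (real \<times> real \<times> real \<Rightarrow> real) \<Rightarrow> (real \<times> real \<times> real \<Rightarrow> real) \<Rightarrow>
   (real \<Rightarrow> real) \<Rightarrow> (real \<Rightarrow> real) \<Rightarrow> (real \<Rightarrow> real) \<Rightarrow>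
   (real \<Rightarrow> real \<Rightarrow> real) \<Rightarrow> (real \<Rightarrow> real \<Rightarrow> real) \<Rightarrow> (real \<Rightarrow> real \<Rightarrow> real) \<Rightarrow>
   (real \<Rightarrow> real \<Rightarrow> real) \<Rightarrow> (real \<Rightarrow> real \<Rightarrow> real) \<Rightarrow> (real \<Rightarrow> real \<Rightarrow> real) \<Rightarrow>
   (real \<Rightarrow> real \<Rightarrow> real) \<Rightarrow> (real \<Rightarrow> real \<Rightarrow> real) \<Rightarrow> (real \<Rightarrow> real \<Rightarrow> real) \<Rightarrow> bool" where
  "bresse_solution L \<rho>1 \<rho>2 b k k0 ell f1 f2 f3 g1 g2 g3 \<phi> \<psi> w \<phi>x \<psi>x wx \<phi>t \<psi>t wt \<longleftrightarrow>
     (\<forall>t\<ge>0. H10 L (\<phi> t) (\<phi>x t) \<and> H10 L (\<psi> t) (\<psi>x t) \<and> H10 L (w t) (wx t)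
            \<and> sq_int L (\<phi>t t) \<and> sq_int L (\<psi>t t) \<and> sq_int L (wt t)) \<and>
     (\<forall>v v'. H10 L v v' \<longrightarrow> (\<forall>t\<ge>0.
        ipL L (\<phi> t) v = ipL L (\<phi> 0) v + integral {0..t} (\<lambda>s. ipL L (\<phi>t s) v) \<and>
        ipL L (\<psi> t) v = ipL L (\<psi> 0) v + integral {0..t} (\<lambda>s. ipL L (\<psi>t s) v) \<and>
        ipL L (w t) v = ipL L (w 0) v + integral {0..t} (\<lambda>s. ipL L (wt s) v) \<and>
        \<rho>1 * ipL L (\<phi>t t) v = \<rho>1 * ipL L (\<phi>t 0) v + integral {0..t} (\<lambda>s.
            - k * ipL L (\<lambda>x. \<phi>x s x + \<psi> s x + ell * w s x) v'
            + k0 * ell * ipL L (\<lambda>x. wx s x - ell * \<phi> s x) v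
            - ipL L (\<lambda>x. g1 (\<phi>t s x)) v
            - ipL L (\<lambda>x. f1 (\<phi> s x, \<psi> s x, w s x)) v) \<and>
        \<rho>2 * ipL L (\<psi>t t) v = \<rho>2 * ipL L (\<psi>t 0) v + integral {0..t} (\<lambda>s.
            - b * ipL L (\<psi>x s) v'
            - k * ipL L (\<lambda>x. \<phi>x s x + \<psi> s x + ell * w s x) v
            - ipL L (\<lambda>x. g2 (\<psi>t s x)) v
            - ipL L (\<lambda>x. f2 (\<phi> s x, \<psi> s x, w s x)) v) \<and>
        \<rho>1 * ipL L (wt t) v = \<rho>1 * ipL L (wt 0) v + integral {0..t} (\<lambda>s.
            - k0 * ipL L (\<lambda>x. wx s x - ell * \<phi> s x) v'
            - k * ell * ipL L (\<lambda>x. \<phi>x s x + \<psi> s x + ell * w s x) v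
            - ipL L (\<lambda>x. g3 (wt s x)) v
            - ipL L (\<lambda>x. f3 (\<phi> s x, \<psi> s x, w s x)) v)))"

end

theory Submission
  imports Defs
begin

lemma aint_iff_lebesgue_on:
  fixes f :: "real \<Rightarrow> real"
  shows "f absolutely_integrable_on {a..b} \<longleftrightarrow> integrable (lebesgue_on {a..b}) f"
  by (simp add: set_integrable_def integrable_restrict_space)

lemma restr_int:
  fixes f :: "real \<Rightarrow> real"
  assumes f: "integrable (lebesgue_on {a..b}) f" and T: "T \<in> sets lebesgue"
  shows "integral\<^sup>L (lebesgue_on {a..b}) (\<lambda>t. f t * of_bool (t \<in> T)) = integral ({a..b} \<inter> T) f"
proof -
  have m: "(\<lambda>t. f t * of_bool (t \<in> T)) \<in> borel_measurable (lebesgue_on {a..b})"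
  proof -
    have "(\<lambda>t. indicator T t * f t) \<in> borel_measurable (lebesgue_on {a..b})"
    proof (intro borel_measurable_times)
      show "indicator T \<in> borel_measurable (lebesgue_on {a..b})"
        using T by (intro measurable_restrict_space1) auto
    qed (use f in auto)
    then show ?thesis by (simp add: indicator_def mult.commute)
  qed
  have i: "integrable (lebesgue_on {a..b}) (\<lambda>t. f t * of_bool (t \<in> T))"
    by (rule Bochner_Integration.integrable_bound[OF f m]) auto
  have "integral\<^sup>L (lebesgue_on {a..b}) (\<lambda>t. f t * of_bool (t \<in> T)) = integral {a..b} (\<lambda>t. f t * of_bool (t \<in> T))"
    using i by (simp add: lebesgue_integral_eq_integral)
  also have "\<dots> = integral {a..b} (\<lambda>t. if t \<in> T then f t else 0)"
    by (rule integral_cong) auto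
  also have "\<dots> = integral ({a..b} \<inter> T) f" by (simp add: integral_restrict_Int Int_commute)
  finally show ?thesis .
qed

lemma ibp_fubini:
  fixes h k :: "real \<Rightarrow> real"
  assumes h: "h absolutely_integrable_on {0..L}" and k: "k absolutely_integrable_on {0..L}"
  shows "integral {0..L} (\<lambda>x. k x * integral {0..x} h) = integral {0..L} (\<lambda>t. h t * integral {t..L} k)"
proof -
  define M where "M = lebesgue_on {0..L::real}"
  interpret M: finite_measure M unfolding M_def by (rule finite_measure_lebesgue_on) auto
  interpret P: pair_sigma_finite M M by unfold_locales
  have hM: "integrable M h" and kM: "integrable M k" using h k by (auto simp: M_def aint_iff_lebesgue_on)
  have [measurable]: "h \<in> borel_measurable M" "k \<in> borel_measurable M" using hM kM by auto
  have idM[measurable]: "(\<lambda>x. x) \<in> borel_measurable M" unfolding M_def using id_borel_measurable_lebesgue_on by (simp add: id_def)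
  have spM: "space M = {0..L}" by (simp add: M_def)
  define G where "G = (\<lambda>x t. k x * h t * of_bool (t \<le> x))"
  have Gm: "(\<lambda>(x,t). G x t) \<in> borel_measurable (M \<Otimes>\<^sub>M M)"
    unfolding G_def by measurable
  have prodint: "integrable (M \<Otimes>\<^sub>M M) (\<lambda>(x,t). k x * h t)"
  proof (rule P.Fubini_integrable)
    show "(\<lambda>(x,t). k x * h t) \<in> borel_measurable (M \<Otimes>\<^sub>M M)" by measurable
    show "integrable M (\<lambda>x. \<integral>y. norm (case (x, y) of (x, t) \<Rightarrow> k x * h t) \<partial>M)"
      using kM hM by (simp add: abs_mult)
    show "AE x in M. integrable M (\<lambda>y. case (x, y) of (x, t) \<Rightarrow> k x * h t)"
      using hM by simp
  qed
  have Gint: "integrable (M \<Otimes>\<^sub>M M) (\<lambda>(x,t). G x t)"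
    by (rule Bochner_Integration.integrable_bound[OF prodint Gm]) (auto simp: G_def abs_mult)
  have F: "(\<integral>t. (\<integral>x. G x t \<partial>M) \<partial>M) = (\<integral>x. (\<integral>t. G x t \<partial>M) \<partial>M)"
    by (rule P.Fubini_integral[OF Gint])
  have inner1: "(\<integral>t. G x t \<partial>M) = k x * integral {0..x} h" if x: "x \<in> {0..L}" for x
  proof -
    have "(\<integral>t. G x t \<partial>M) = k x * (\<integral>t. h t * of_bool (t \<in> {..x}) \<partial>M)"
      unfolding G_def by (simp add: mult.assoc)
    also have "(\<integral>t. h t * of_bool (t \<in> {..x}) \<partial>M) = integral ({0..L} \<inter> {..x}) h"
      unfolding M_def by (rule restr_int) (use hM M_def in auto)
    also have "{0..L} \<inter> {..x} = {0..x}" using x by auto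
    finally show ?thesis .
  qed
  have inner2: "(\<integral>x. G x t \<partial>M) = h t * integral {t..L} k" if t: "t \<in> {0..L}" for t
  proof -
    have "(\<integral>x. G x t \<partial>M) = h t * (\<integral>x. k x * of_bool (x \<in> {t..}) \<partial>M)"
      unfolding G_def by (simp add: mult_ac)
    also have "(\<integral>x. k x * of_bool (x \<in> {t..}) \<partial>M) = integral ({0..L} \<inter> {t..}) k"
      unfolding M_def by (rule restr_int) (use kM M_def in auto)
    also have "{0..L} \<inter> {t..} = {t..L}" using t by auto
    finally show ?thesis .
  qed
  have I1: "integrable M (\<lambda>x. \<integral>t. G x t \<partial>M)" using P.integrable_fst[OF Gint] .
  have I2: "integrable M (\<lambda>t. \<integral>x. G x t \<partial>M)" using P.integrable_snd[OF Gint] .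
  have I1': "integrable M (\<lambda>x. k x * integral {0..x} h)"
  proof -
    have "integrable M (\<lambda>x. \<integral>t. G x t \<partial>M) = integrable M (\<lambda>x. k x * integral {0..x} h)"
      using inner1 by (intro Bochner_Integration.integrable_cong) (auto simp: spM)
    then show ?thesis using I1 by simp
  qed
  have I2': "integrable M (\<lambda>t. h t * integral {t..L} k)"
  proof -
    have "integrable M (\<lambda>t. \<integral>x. G x t \<partial>M) = integrable M (\<lambda>t. h t * integral {t..L} k)"
      using inner2 by (intro Bochner_Integration.integrable_cong) (auto simp: spM)
    then show ?thesis using I2 by simp
  qed
  have "integral {0..L} (\<lambda>x. k x * integral {0..x} h) = (\<integral>x. k x * integral {0..x} h \<partial>M)"
    using I1' by (simp add: M_def lebesgue_integral_eq_integral)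
  also have "\<dots> = (\<integral>x. (\<integral>t. G x t \<partial>M) \<partial>M)"
    using inner1 by (intro Bochner_Integration.integral_cong) (auto simp: spM)
  also have "\<dots> = (\<integral>t. (\<integral>x. G x t \<partial>M) \<partial>M)" using F by simp
  also have "\<dots> = (\<integral>t. h t * integral {t..L} k \<partial>M)"
    using inner2 by (intro Bochner_Integration.integral_cong) (auto simp: spM)
  also have "\<dots> = integral {0..L} (\<lambda>t. h t * integral {t..L} k)"
    using I2' by (simp add: M_def lebesgue_integral_eq_integral)
  finally show ?thesis .
qed

lemma cont_mult_aint:
  fixes f g :: "real \<Rightarrow> real"
  assumes "continuous_on {a..b} f" "g absolutely_integrable_on {a..b}"
  shows "(\<lambda>x. f x * g x) absolutely_integrable_on {a..b}"
proof (rule absolutely_integrable_bounded_measurable_product_real)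
  show "f \<in> borel_measurable (lebesgue_on {a..b})"
    using assms(1) by (intro continuous_imp_measurable_on_sets_lebesgue) auto
  show "bounded (f ` {a..b})"
    using assms(1) by (intro compact_imp_bounded compact_continuous_image) auto
qed (use assms in auto)

lemma aint_sub:
  fixes f :: "real \<Rightarrow> real"
  assumes "f absolutely_integrable_on {a..b}" "a \<le> c" "d \<le> b"
  shows "f absolutely_integrable_on {c..d}"
  using absolutely_integrable_on_subcbox[where f=f and S="{a..b}" and a=c and b=d] assms by auto

lemma ibp_full:
  fixes h k :: "real \<Rightarrow> real"
  assumes h: "h absolutely_integrable_on {0..L}" and k: "k absolutely_integrable_on {0..L}"
  shows "integral {0..L} (\<lambda>x. k x * integral {0..x} h) + integral {0..L} (\<lambda>t. h t * integral {0..t} k)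
         = integral {0..L} k * integral {0..L} h"
proof -
  have ki: "k integrable_on {0..L}" using k set_lebesgue_integral_eq_integral(1) by blast
  have IKc: "continuous_on {0..L} (\<lambda>t. integral {0..t} k)"
    using ki by (rule indefinite_integral_continuous_1)
  have hIK: "(\<lambda>t. integral {0..t} k * h t) absolutely_integrable_on {0..L}"
    by (rule cont_mult_aint[OF IKc h])
  have hIKi: "(\<lambda>t. h t * integral {0..t} k) integrable_on {0..L}"
    using set_lebesgue_integral_eq_integral(1)[OF hIK] by (simp add: mult.commute)
  have hi: "h integrable_on {0..L}" using h set_lebesgue_integral_eq_integral(1) by blast
  have eq: "h t * integral {t..L} k = integral {0..L} k * h t - h t * integral {0..t} k"
    if t: "t \<in> {0..L}" for t
  proof -
    have e: "integral {0..t} k + integral {t..L} k = integral {0..L} k"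
      using t ki by (intro Henstock_Kurzweil_Integration.integral_combine) auto
    show ?thesis by (simp add: algebra_simps flip: e)
  qed
  have "integral {0..L} (\<lambda>x. k x * integral {0..x} h) = integral {0..L} (\<lambda>t. h t * integral {t..L} k)"
    by (rule ibp_fubini[OF h k])
  also have "\<dots> = integral {0..L} (\<lambda>t. integral {0..L} k * h t - h t * integral {0..t} k)"
    by (rule integral_cong) (use eq in auto)
  also have "\<dots> = integral {0..L} k * integral {0..L} h - integral {0..L} (\<lambda>t. h t * integral {0..t} k)"
    using hi hIKi by (simp add: integral_diff integrable_on_mult_right)
  finally show ?thesis by simp
qed

lemma sq_antideriv:
  fixes f :: "real \<Rightarrow> real"
  assumes f: "f absolutely_integrable_on {0..L}" and x: "x \<in> {0..L}"
  shows "(integral {0..x} f)^2 = integral {0..x} (\<lambda>t. 2 * f t * integral {0..t} f)"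
proof -
  have fx: "f absolutely_integrable_on {0..x}" using aint_sub[OF f] x by auto
  have fxi: "f integrable_on {0..x}" using fx set_lebesgue_integral_eq_integral(1) by blast
  have Uc: "continuous_on {0..x} (\<lambda>t. integral {0..t} f)"
    using fxi by (rule indefinite_integral_continuous_1)
  have hi: "(\<lambda>t. integral {0..t} f * f t) integrable_on {0..x}"
    using set_lebesgue_integral_eq_integral(1)[OF cont_mult_aint[OF Uc fx]] .
  have "integral {0..x} (\<lambda>t. f t * integral {0..t} f) + integral {0..x} (\<lambda>t. f t * integral {0..t} f)
        = integral {0..x} f * integral {0..x} f"
    by (rule ibp_full[OF fx fx])
  moreover have "integral {0..x} (\<lambda>t. 2 * f t * integral {0..t} f) = 2 * integral {0..x} (\<lambda>t. f t * integral {0..t} f)"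
    using hi by (simp add: mult.assoc mult.commute[of "f _"])
  ultimately show ?thesis by (simp add: power2_eq_square)
qed

lemma cot_deriv:
  fixes a \<delta> x :: real
  assumes "sin (a * (x + \<delta>)) \<noteq> 0"
  shows "((\<lambda>x. a * cos (a * (x + \<delta>)) / sin (a * (x + \<delta>))) has_real_derivative
           - (a^2 + (a * cos (a * (x + \<delta>)) / sin (a * (x + \<delta>)))^2)) (at x)"
proof -
  let ?s = "sin (a * (x + \<delta>))" and ?c = "cos (a * (x + \<delta>))"
  have "((\<lambda>x. a * cos (a * (x + \<delta>)) / sin (a * (x + \<delta>))) has_real_derivative
           (a * (- ?s * (a * 1)) * ?s - a * ?c * (?c * (a * 1))) / (?s * ?s)) (at x)"
    using assms by (auto intro!: derivative_eq_intros)
  moreover have "(a * (- ?s * (a * 1)) * ?s - a * ?c * (?c * (a * 1))) / (?s * ?s)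
      = - (a^2 + (a * ?c / ?s)^2)"
  proof -
    have "?s^2 + ?c^2 = 1" by simp
    then show ?thesis using assms by (simp add: field_simps power2_eq_square)
  qed
  ultimately show ?thesis by simp
qed

lemma poincare:
  fixes f :: "real \<Rightarrow> real" and L \<delta> :: real
  assumes f: "f absolutely_integrable_on {0..L}" and f2: "(\<lambda>x. (f x)^2) integrable_on {0..L}"
    and UL: "integral {0..L} f = 0" and \<delta>: "\<delta> > 0" and L: "L > 0"
  shows "integral {0..L} (\<lambda>x. (integral {0..x} f)^2) \<le> ((L + 2*\<delta>)/pi)^2 * integral {0..L} (\<lambda>x. (f x)^2)"
proof -
  define a where "a = pi / (L + 2*\<delta>)"
  have a: "a > 0" using L \<delta> by (simp add: a_def)
  define q where "q = (\<lambda>x. a * cos (a * (x + \<delta>)) / sin (a * (x + \<delta>)))"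
  define qd where "qd = (\<lambda>x. - (a^2 + (q x)^2))"
  have sinpos: "sin (a * (x + \<delta>)) > 0" if x: "x \<in> {0..L}" for x
  proof (rule sin_gt_zero)
    show "0 < a * (x + \<delta>)" using a x \<delta> by auto
    have "a * (x + \<delta>) < a * (L + 2*\<delta>)" using a x \<delta> by (intro mult_strict_left_mono) auto
    also have "\<dots> = pi" using L \<delta> by (simp add: a_def)
    finally show "a * (x + \<delta>) < pi" .
  qed
  have qder: "(q has_real_derivative qd x) (at x)" if "x \<in> {0..L}" for x
    using cot_deriv[of a x \<delta>] sinpos[OF that] unfolding q_def qd_def by simp
  have qcont: "continuous_on {0..L} q"
  proof (rule continuous_at_imp_continuous_on, intro ballI)
    fix x :: real assume "x \<in> {0..L}"
    then show "isCont q x" using qder DERIV_isCont by blast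
  qed
  have qdcont: "continuous_on {0..L} qd"
    unfolding qd_def by (intro continuous_intros qcont)
  have qftc: "integral {0..x} qd = q x - q 0" if x: "x \<in> {0..L}" for x
  proof -
    have "(qd has_integral q x - q 0) {0..x}"
    proof (rule fundamental_theorem_of_calculus)
      show "0 \<le> x" using x by simp
      fix y assume y: "y \<in> {0..x}"
      then have "y \<in> {0..L}" using x by auto
      then have "(q has_real_derivative qd y) (at y within {0..x})"
        using qder has_field_derivative_at_within by blast
      then show "(q has_vector_derivative qd y) (at y within {0..x})"
        by (simp add: has_real_derivative_iff_has_vector_derivative)
    qed
    then show ?thesis by (rule integral_unique)
  qed
  define U where "U = (\<lambda>x. integral {0..x} f)"
  have fi: "f integrable_on {0..L}" using f set_lebesgue_integral_eq_integral(1) by blast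
  have Uc: "continuous_on {0..L} U" unfolding U_def using fi by (rule indefinite_integral_continuous_1)
  have UL0: "U L = 0" using UL by (simp add: U_def)
  define h where "h = (\<lambda>t. 2 * f t * U t)"
  have haint: "h absolutely_integrable_on {0..L}"
  proof -
    have "(\<lambda>t. (2 * U t) * f t) absolutely_integrable_on {0..L}"
      by (rule cont_mult_aint[OF _ f]) (intro continuous_intros Uc)
    then show ?thesis by (simp add: h_def mult_ac)
  qed
  have qdaint: "qd absolutely_integrable_on {0..L}"
    using qdcont by (simp add: absolutely_integrable_continuous_real)
  have Hsq: "integral {0..x} h = (U x)^2" if "x \<in> {0..L}" for x
    using sq_antideriv[OF f that] by (simp add: h_def U_def)
  have ibp: "integral {0..L} (\<lambda>x. qd x * integral {0..x} h) + integral {0..L} (\<lambda>t. h t * integral {0..t} qd)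
         = integral {0..L} qd * integral {0..L} h"
    by (rule ibp_full[OF haint qdaint])
  have hL: "integral {0..L} h = 0" using Hsq[of L] L UL0 by simp
  have e1: "integral {0..L} (\<lambda>x. qd x * integral {0..x} h) = integral {0..L} (\<lambda>x. qd x * (U x)^2)"
    by (rule integral_cong) (simp add: Hsq)
  have e2: "integral {0..L} (\<lambda>t. h t * integral {0..t} qd) = integral {0..L} (\<lambda>t. h t * q t - q 0 * h t)"
    by (rule integral_cong) (simp add: qftc algebra_simps)
  have hi: "h integrable_on {0..L}" using haint set_lebesgue_integral_eq_integral(1) by blast
  have hqaint: "(\<lambda>t. q t * h t) absolutely_integrable_on {0..L}" by (rule cont_mult_aint[OF qcont haint])
  have hqi: "(\<lambda>t. h t * q t) integrable_on {0..L}"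
    using set_lebesgue_integral_eq_integral(1)[OF hqaint] by (simp add: mult.commute)
  have e3: "integral {0..L} (\<lambda>t. h t * q t - q 0 * h t) = integral {0..L} (\<lambda>t. h t * q t)"
    using hi hqi hL by (simp add: integral_diff integrable_on_mult_right)
  have key: "integral {0..L} (\<lambda>x. qd x * (U x)^2) + integral {0..L} (\<lambda>t. h t * q t) = 0"
    using ibp e1 e2 e3 hL by simp
  have U2i: "(\<lambda>x. (U x)^2) integrable_on {0..L}"
    by (intro integrable_continuous_interval continuous_intros Uc)
  have qU2i: "(\<lambda>x. (q x)^2 * (U x)^2) integrable_on {0..L}"
    by (intro integrable_continuous_interval continuous_intros Uc qcont)
  have qdU: "integral {0..L} (\<lambda>x. qd x * (U x)^2) = - (a^2 * integral {0..L} (\<lambda>x. (U x)^2)) - integral {0..L} (\<lambda>x. (q x)^2 * (U x)^2)"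
  proof -
    have "integral {0..L} (\<lambda>x. qd x * (U x)^2) = integral {0..L} (\<lambda>x. - (a^2 * (U x)^2) - (q x)^2 * (U x)^2)"
      by (rule integral_cong) (simp add: qd_def algebra_simps)
    also have "\<dots> = - (a^2 * integral {0..L} (\<lambda>x. (U x)^2)) - integral {0..L} (\<lambda>x. (q x)^2 * (U x)^2)"
      using U2i qU2i by (simp add: integral_diff integral_neg integrable_on_mult_right integrable_neg)
    finally show ?thesis .
  qed
  have sqi: "(\<lambda>x. (f x)^2 - h x * q x + (q x)^2 * (U x)^2) integrable_on {0..L}"
    using f2 hqi qU2i by (intro integrable_add integrable_diff) auto
  have nn: "0 \<le> integral {0..L} (\<lambda>x. (f x)^2 - h x * q x + (q x)^2 * (U x)^2)"
  proof (rule integral_nonneg[OF sqi])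
    fix x
    have "(f x)^2 - h x * q x + (q x)^2 * (U x)^2 = (f x - q x * U x)^2"
      by (simp add: h_def power2_eq_square algebra_simps)
    then show "0 \<le> (f x)^2 - h x * q x + (q x)^2 * (U x)^2" by simp
  qed
  also have "\<dots> = integral {0..L} (\<lambda>x. (f x)^2) - integral {0..L} (\<lambda>t. h t * q t) + integral {0..L} (\<lambda>x. (q x)^2 * (U x)^2)"
    using f2 hqi qU2i by (simp add: integral_add integral_diff integrable_diff)
  finally have "a^2 * integral {0..L} (\<lambda>x. (U x)^2) \<le> integral {0..L} (\<lambda>x. (f x)^2)"
    using key qdU by linarith
  then have "integral {0..L} (\<lambda>x. (U x)^2) \<le> integral {0..L} (\<lambda>x. (f x)^2) / a^2"
    using a by (simp add: field_simps)
  also have "\<dots> = (1 / a^2) * integral {0..L} (\<lambda>x. (f x)^2)" by simp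
  also have "1 / a^2 = ((L + 2*\<delta>)/pi)^2" by (simp add: a_def power_divide)
  finally show ?thesis by (simp add: U_def)
qed

lemma H10_facts:
  assumes "H10 L u u'" "L > 0" and that: "\<delta> > 0"
  shows "continuous_on {0..L} u" "(\<lambda>x. (u x)^2) integrable_on {0..L}"
    "integral {0..L} (\<lambda>x. (u x)^2) \<le> ((L + 2*\<delta>)/pi)^2 * sqn L u'"
proof -
  have ua: "u' absolutely_integrable_on {0..L}" and u2: "(\<lambda>x. (u' x)^2) integrable_on {0..L}"
    and ueq: "\<And>x. x \<in> {0..L} \<Longrightarrow> u x = integral {0..x} u'" and uL: "u L = 0"
    using assms by (auto simp: H10_def sq_int_def)
  have ui: "u' integrable_on {0..L}" using ua set_lebesgue_integral_eq_integral(1) by blast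
  have "continuous_on {0..L} (\<lambda>x. integral {0..x} u')" using ui by (rule indefinite_integral_continuous_1)
  then show uc: "continuous_on {0..L} u" using ueq by (metis (no_types, lifting) continuous_on_cong)
  show "(\<lambda>x. (u x)^2) integrable_on {0..L}"
    by (intro integrable_continuous_interval continuous_intros uc)
  have I0: "integral {0..L} u' = 0" using ueq[of L] uL assms(2) by simp
  have "integral {0..L} (\<lambda>x. (u x)^2) = integral {0..L} (\<lambda>x. (integral {0..x} u')^2)"
    by (rule integral_cong) (simp add: ueq)
  also have "\<dots> \<le> ((L + 2*\<delta>)/pi)^2 * integral {0..L} (\<lambda>x. (u' x)^2)"
    by (rule poincare[OF ua u2 I0 that assms(2)])
  finally show "integral {0..L} (\<lambda>x. (u x)^2) \<le> ((L + 2*\<delta>)/pi)^2 * sqn L u'"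
    by (simp add: sqn_def)
qed

lemma sqn_nonneg: "sq_int L f \<Longrightarrow> 0 \<le> sqn L f"
  unfolding sqn_def sq_int_def by (auto intro: integral_nonneg)

lemma state_bound:
  fixes F :: "real \<times> real \<times> real \<Rightarrow> real"
  assumes hp: "H10 L p px" and hs: "H10 L s sx" and hw: "H10 L w wx"
    and sp: "sq_int L pt" and ss: "sq_int L st" and sw: "sq_int L wt"
    and g3: "gamma3_ok L b k k0 ell \<gamma>3"
    and pos: "L > 0" "\<rho>1 > 0" "\<rho>2 > 0" "\<gamma>3 > 0" "\<beta> \<ge> 0" "mF \<ge> 0" "\<delta> > 0"
    and Fc: "continuous_on UNIV F"
    and Flow: "\<And>u v w. F (u, v, w) \<ge> - \<beta> * (u^2 + v^2 + w^2) - mF"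
  shows "bresse_E L \<rho>1 \<rho>2 b k k0 ell p s w px sx wx pt st wt + integral {0..L} (\<lambda>x. F (p x, s x, w x))
     \<ge> (1 - 2 * \<beta> * ((L + 2*\<delta>)/pi)^2 * \<gamma>3) * bresse_E L \<rho>1 \<rho>2 b k k0 ell p s w px sx wx pt st wt - L * mF"
proof -
  define c where "c = ((L + 2*\<delta>)/pi)^2"
  have c0: "c \<ge> 0" by (simp add: c_def)
  define P where "P = b * sqn L sx + k * sqn L (\<lambda>x. px x + s x + ell * w x) + k0 * sqn L (\<lambda>x. wx x - ell * p x)"
  define K where "K = \<rho>1 * sqn L pt + \<rho>2 * sqn L st + \<rho>1 * sqn L wt"
  define E where "E = bresse_E L \<rho>1 \<rho>2 b k k0 ell p s w px sx wx pt st wt"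
  have EKP: "E = (K + P) / 2" by (simp add: E_def K_def P_def bresse_E_def)
  have K0: "K \<ge> 0" unfolding K_def using pos sqn_nonneg[OF sp] sqn_nonneg[OF ss] sqn_nonneg[OF sw] by simp
  have G: "sqn L px + sqn L sx + sqn L wx \<le> \<gamma>3 * P"
    using g3 hp hs hw unfolding gamma3_ok_def P_def by blast
  have pc: "continuous_on {0..L} p" and pi2: "(\<lambda>x. (p x)^2) integrable_on {0..L}"
    and pb: "integral {0..L} (\<lambda>x. (p x)^2) \<le> c * sqn L px"
    using H10_facts[OF hp pos(1) pos(7)] pos c_def by auto
  have sc: "continuous_on {0..L} s" and si2: "(\<lambda>x. (s x)^2) integrable_on {0..L}"
    and sb: "integral {0..L} (\<lambda>x. (s x)^2) \<le> c * sqn L sx"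
    using H10_facts[OF hs pos(1) pos(7)] pos c_def by auto
  have wc: "continuous_on {0..L} w" and wi2: "(\<lambda>x. (w x)^2) integrable_on {0..L}"
    and wb: "integral {0..L} (\<lambda>x. (w x)^2) \<le> c * sqn L wx"
    using H10_facts[OF hw pos(1) pos(7)] pos c_def by auto
  define I where "I = integral {0..L} (\<lambda>x. (p x)^2) + integral {0..L} (\<lambda>x. (s x)^2) + integral {0..L} (\<lambda>x. (w x)^2)"
  have Ib: "I \<le> c * (\<gamma>3 * P)"
  proof -
    have "I \<le> c * (sqn L px + sqn L sx + sqn L wx)" using pb sb wb by (simp add: I_def distrib_left)
    also have "\<dots> \<le> c * (\<gamma>3 * P)" using G c0 by (rule mult_left_mono)
    finally show ?thesis .
  qed
  have Fcomp: "continuous_on {0..L} (\<lambda>x. F (p x, s x, w x))"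
    by (rule continuous_on_compose2[OF Fc]) (auto intro!: continuous_intros pc sc wc)
  have lowint: "((\<lambda>x. - \<beta> * ((p x)^2 + (s x)^2 + (w x)^2) - mF) has_integral (- \<beta> * I - mF * L)) {0..L}"
  proof -
    have "((\<lambda>x. (p x)^2 + (s x)^2 + (w x)^2) has_integral I) {0..L}"
      unfolding I_def using pi2 si2 wi2 by (intro has_integral_add integrable_integral)
    then have "((\<lambda>x. - \<beta> * ((p x)^2 + (s x)^2 + (w x)^2)) has_integral (- \<beta> * I)) {0..L}"
      by (rule has_integral_mult_right)
    moreover have "((\<lambda>x. mF) has_integral mF * L) {0..L}"
      using has_integral_const_real[of mF 0 L] pos by (simp add: mult.commute)
    ultimately show ?thesis by (rule has_integral_diff)
  qed
  have Fint: "- \<beta> * I - mF * L \<le> integral {0..L} (\<lambda>x. F (p x, s x, w x))"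
    using has_integral_le[OF lowint integrable_integral[OF integrable_continuous_interval[OF Fcomp]]] Flow
    by blast
  have "\<beta> * I \<le> \<beta> * (c * (\<gamma>3 * P))" using Ib pos by (intro mult_left_mono) auto
  also have "\<dots> \<le> \<beta> * (c * (\<gamma>3 * (K + P)))"
    using pos c0 K0 by (intro mult_left_mono) auto
  also have "\<beta> * (c * (\<gamma>3 * (K + P))) = 2 * \<beta> * c * \<gamma>3 * E" by (simp add: EKP field_simps)
  finally have "\<beta> * I \<le> 2 * \<beta> * c * \<gamma>3 * E" .
  then have "E + integral {0..L} (\<lambda>x. F (p x, s x, w x)) \<ge> (1 - 2 * \<beta> * c * \<gamma>3) * E - L * mF"
    using Fint by (simp add: algebra_simps)
  then show ?thesis by (simp add: E_def c_def)
qed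

lemma choose_delta:
  fixes L \<beta> \<gamma>3 :: real
  assumes "L > 0" "\<gamma>3 > 0" "\<beta> \<ge> 0" "\<beta> < pi^2 / (2 * \<gamma>3 * L^2)"
  shows "\<exists>\<delta>>0. 2 * \<beta> * ((L + 2*\<delta>)/pi)^2 * \<gamma>3 < 1"
proof (cases "\<beta> = 0")
  case True then show ?thesis by (intro exI[of _ 1]) auto
next
  case False
  then have b: "\<beta> > 0" using assms by auto
  define r where "r = sqrt (2 * \<beta> * \<gamma>3)"
  have r: "r > 0" using b assms by (simp add: r_def)
  have r2: "r^2 = 2 * \<beta> * \<gamma>3" using b assms by (simp add: r_def)
  have "2 * \<beta> * \<gamma>3 * L^2 < pi^2"
    using assms(4) assms(1,2) by (simp add: field_simps)
  then have "(r * L)^2 < pi^2" by (simp add: power_mult_distrib r2)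
  then have rL: "r * L < pi" using r assms(1) by (smt (verit) pi_gt_zero power_mono)
  define \<delta> where "\<delta> = (pi / r - L) / 4"
  have L': "L < pi / r" using rL r by (simp add: field_simps)
  have d: "\<delta> > 0" using L' by (simp add: \<delta>_def)
  have "r * (L + 2*\<delta>) = (r * L + pi) / 2" using r by (simp add: \<delta>_def field_simps)
  also have "\<dots> < pi" using rL by simp
  finally have lt: "r * (L + 2*\<delta>) < pi" .
  have pos: "r * (L + 2*\<delta>) > 0" using r d assms(1) by simp
  have "(r * (L + 2*\<delta>))^2 < pi^2" using lt pos by (intro power_strict_mono) auto
  then have "2 * \<beta> * \<gamma>3 * (L + 2*\<delta>)^2 < pi^2" by (simp add: power_mult_distrib r2)
  then have "2 * \<beta> * ((L + 2*\<delta>)/pi)^2 * \<gamma>3 < 1" by (simp add: power_divide field_simps)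
  then show ?thesis using d by blast
qed

theorem lemma2p1:
  fixes L \<rho>1 \<rho>2 b k k0 \<beta> mF \<gamma>3 :: real
    and F f1 f2 f3 :: "real \<times> real \<times> real \<Rightarrow> real"
    and g1 g2 g3 :: "real \<Rightarrow> real"
  assumes "L > 0" "\<rho>1 > 0" "\<rho>2 > 0" "b > 0" "k > 0" "k0 > 0"
    and grad: "\<And>p. (F has_derivative
                 (\<lambda>h. f1 p * fst h + f2 p * fst (snd h) + f3 p * snd (snd h))) (at p)"
    and C1_f1: "\<exists>D. (\<forall>p. (f1 has_derivative blinfun_apply (D p)) (at p)) \<and> continuous_on UNIV D"
    and C1_f2: "\<exists>D. (\<forall>p. (f2 has_derivative blinfun_apply (D p)) (at p)) \<and> continuous_on UNIV D"
    and C1_f3: "\<exists>D. (\<forall>p. (f3 has_derivative blinfun_apply (D p)) (at p)) \<and> continuous_on UNIV D"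
    and "\<gamma>3 > 0" "\<beta> \<ge> 0" "mF \<ge> 0" "\<beta> < pi^2 / (2 * \<gamma>3 * L^2)"
    and Flow: "\<And>u v w. F (u, v, w) \<ge> - \<beta> * (u^2 + v^2 + w^2) - mF"
  shows "\<exists>\<beta>0 > 0. \<forall>ell > 0. gamma3_ok L b k k0 ell \<gamma>3 \<longrightarrow>
           (\<forall>\<phi> \<psi> w \<phi>x \<psi>x wx \<phi>t \<psi>t wt.
              bresse_solution L \<rho>1 \<rho>2 b k k0 ell f1 f2 f3 g1 g2 g3 \<phi> \<psi> w \<phi>x \<psi>x wx \<phi>t \<psi>t wt \<longrightarrow>
              (\<forall>t\<ge>0.
                 bresse_E L \<rho>1 \<rho>2 b k k0 ell (\<phi> t) (\<psi> t) (w t) (\<phi>x t) (\<psi>x t) (wx t) (\<phi>t t) (\<psi>t t) (wt t)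
                   + integral {0..L} (\<lambda>x. F (\<phi> t x, \<psi> t x, w t x))
                 \<ge> \<beta>0 * bresse_E L \<rho>1 \<rho>2 b k k0 ell (\<phi> t) (\<psi> t) (w t) (\<phi>x t) (\<psi>x t) (wx t) (\<phi>t t) (\<psi>t t) (wt t)
                   - L * mF))"
proof -
  obtain \<delta> where d: "\<delta> > 0" and dl: "2 * \<beta> * ((L + 2*\<delta>)/pi)^2 * \<gamma>3 < 1"
    using choose_delta[of L \<gamma>3 \<beta>] assms by blast
  have Fc: "continuous_on UNIV F"
  proof (rule continuous_at_imp_continuous_on, intro ballI)
    fix p :: "real \<times> real \<times> real"
    show "isCont F p" using has_derivative_continuous[OF grad[of p]] .
  qed
  show ?thesis
  proof (intro exI[of _ "1 - 2 * \<beta> * ((L + 2*\<delta>)/pi)^2 * \<gamma>3"] conjI allI impI)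
    show "0 < 1 - 2 * \<beta> * ((L + 2*\<delta>)/pi)^2 * \<gamma>3" using dl by simp
    fix ell \<phi> \<psi> w \<phi>x \<psi>x wx \<phi>t \<psi>t wt and t :: real
    assume g3: "gamma3_ok L b k k0 ell \<gamma>3"
      and sol: "bresse_solution L \<rho>1 \<rho>2 b k k0 ell f1 f2 f3 g1 g2 g3 \<phi> \<psi> w \<phi>x \<psi>x wx \<phi>t \<psi>t wt"
      and t: "0 \<le> t"
    have st: "H10 L (\<phi> t) (\<phi>x t)" "H10 L (\<psi> t) (\<psi>x t)" "H10 L (w t) (wx t)"
      "sq_int L (\<phi>t t)" "sq_int L (\<psi>t t)" "sq_int L (wt t)"
      using sol t unfolding bresse_solution_def by blast+
    show "bresse_E L \<rho>1 \<rho>2 b k k0 ell (\<phi> t) (\<psi> t) (w t) (\<phi>x t) (\<psi>x t) (wx t) (\<phi>t t) (\<psi>t t) (wt t)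
                   + integral {0..L} (\<lambda>x. F (\<phi> t x, \<psi> t x, w t x))
                 \<ge> (1 - 2 * \<beta> * ((L + 2*\<delta>)/pi)^2 * \<gamma>3) * bresse_E L \<rho>1 \<rho>2 b k k0 ell (\<phi> t) (\<psi> t) (w t) (\<phi>x t) (\<psi>x t) (wx t) (\<phi>t t) (\<psi>t t) (wt t)
                   - L * mF"
      by (rule state_bound[OF st g3 _ _ _ _ _ _ d Fc Flow]) (use assms in auto)
  qed
qed
end
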